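(* Consider a binary symmetric model $\mathrm{BOHT}(2,r,\mathrm{Unif}(\{\pm\}),B,D)$ with $\mathbb E_{t\sim D}t=d$. If $(r-1)\,d\,\sup_{0<\epsilon\le1}f_B(\epsilon)<1$, where $f_B(\epsilon)=\frac{1}{(r-1)\epsilon}C_{\chi^2}\big(\mathrm{BEC}_{1-\epsilon}^{\times(r-1)}\circ B\big)$, then reconstruction is impossible.
   Context: $B:\{\pm\}\to\{\pm\}^{r-1}$ is a kernel which, together with the coordinatewise sign flip, is a BMS channel (a channel $P:\{\pm\}\to\mathcal Y$ is BMS if there is a measurable involution $\sigma$ of $\mathcal Y$ with $P(E|+)=P(\sigma(E)|-)$), and whose marginals are uniform. $\mathrm{BOHT}(2,r,\mathrm{Unif}(\{\pm\}),B,D)$: on a Galton–Watson $r$-uniform linear hypertree rooted at $\rho$ where each vertex independently has $t\sim D$ downward hyperedges (each with $r-1$ new children), $\sigma_\rho\sim\mathrm{Unif}(\{\pm\})$ and, given $\sigma_u$, children's labels in each downward hyperedge of $u$ are drawn independently across hyperedges from $B(\cdot|\sigma_u)$. Reconstruction is impossible if $\lim_k I(\sigma_\rho;T_k,\sigma_{L_k})=0$ ($T_k$: vertices at distance $\le k$ from $\rho$; $L_k$: distance exactly $k$). $\mathrm{BEC}_e$ is the binary erasure channel with erasure probability $e$; $C_{\chi^2}$ is the $\chi^2$-information with uniform input. *)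

theory Defs
  imports "HOL-Probability.Probability"
begin

text \<open>Labels: True = +, False = -.\<close>

primrec seq_pmf :: "'a pmf list \<Rightarrow> 'a list pmf" where
  "seq_pmf [] = return_pmf []"
| "seq_pmf (p # ps) = bind_pmf p (\<lambda>x. map_pmf (\<lambda>xs. x # xs) (seq_pmf ps))"

text \<open>Observation (T_k, sigma_{L_k}) of the subtree hanging at a vertex, truncated at depth k:
  a vertex at depth k is a leaf carrying its label; a vertex at depth < k records
  its list of downward hyperedges (each a list of r-1 children), its label is hidden.\<close>
datatype obs = Leaf bool | Inner "obs list list"

primrec boht_obs :: "nat pmf \<Rightarrow> (bool \<Rightarrow> bool list pmf) \<Rightarrow> nat \<Rightarrow> bool \<Rightarrow> obs pmf" where
  "boht_obs D B 0 s = return_pmf (Leaf s)"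
| "boht_obs D B (Suc k) s =
     bind_pmf D (\<lambda>t. map_pmf Inner
       (seq_pmf (replicate t (bind_pmf (B s) (\<lambda>xs. seq_pmf (map (boht_obs D B k) xs))))))"

definition boht_joint :: "nat pmf \<Rightarrow> (bool \<Rightarrow> bool list pmf) \<Rightarrow> nat \<Rightarrow> (bool \<times> obs) pmf" where
  "boht_joint D B k = bind_pmf (pmf_of_set UNIV) (\<lambda>s. map_pmf (\<lambda>ob. (s, ob)) (boht_obs D B k s))"

definition mutual_info_pmf :: "('a \<times> 'b) pmf \<Rightarrow> real" where
  "mutual_info_pmf P = measure_pmf.expectation P
     (\<lambda>(x, y). ln (pmf P (x, y) / (pmf (map_pmf fst P) x * pmf (map_pmf snd P) y)))"

definition chi2_info_pmf :: "('a \<times> 'b) pmf \<Rightarrow> real" where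
  "chi2_info_pmf P = (\<Sum>\<^sub>\<infinity>z. (pmf P z)\<^sup>2 / (pmf (map_pmf fst P) (fst z) * pmf (map_pmf snd P) (snd z))) - 1"

definition C_chi2 :: "(bool \<Rightarrow> 'y pmf) \<Rightarrow> real" where
  "C_chi2 W = chi2_info_pmf (bind_pmf (pmf_of_set UNIV) (\<lambda>s. map_pmf (\<lambda>y. (s, y)) (W s)))"

definition BEC :: "real \<Rightarrow> 'a \<Rightarrow> 'a option pmf" where
  "BEC e x = map_pmf (\<lambda>b. if b then None else Some x) (bernoulli_pmf e)"

definition BEC_prod_comp :: "real \<Rightarrow> (bool \<Rightarrow> bool list pmf) \<Rightarrow> bool \<Rightarrow> bool option list pmf" where
  "BEC_prod_comp e B s = bind_pmf (B s) (\<lambda>xs. seq_pmf (map (BEC e) xs))"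

definition f_B :: "nat \<Rightarrow> (bool \<Rightarrow> bool list pmf) \<Rightarrow> real \<Rightarrow> real" where
  "f_B r B \<epsilon> = C_chi2 (BEC_prod_comp (1 - \<epsilon>) B) / (real (r - 1) * \<epsilon>)"

definition bms_flip :: "(bool \<Rightarrow> bool list pmf) \<Rightarrow> bool" where
  "bms_flip B \<longleftrightarrow> (\<forall>E. measure_pmf.prob (B True) E = measure_pmf.prob (B False) (map Not ` E))"

end

theory Submission
  imports Defs
begin


definition capterm :: "real \<Rightarrow> real \<Rightarrow> real" where
  "capterm a b = (a - b)^2 / (2 * (a + b))"

definition cap :: "(bool \<Rightarrow> 'y pmf) \<Rightarrow> real" where
  "cap W = (\<Sum>\<^sub>\<infinity>y. capterm (pmf (W True) y) (pmf (W False) y))"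

lemma capterm_nonneg: "0 \<le> a \<Longrightarrow> 0 \<le> b \<Longrightarrow> 0 \<le> capterm a b"
  by (simp add: capterm_def)

lemma capterm_le: assumes "0 \<le> a" "0 \<le> b" shows "capterm a b \<le> (a + b) / 2"
proof (cases "a + b = 0")
  case True then show ?thesis by (simp add: capterm_def)
next
  case False
  then have p: "a + b > 0" using assms by auto
  have "(a - b)^2 \<le> (a + b)^2" using assms by (simp add: power2_eq_square algebra_simps)
  then have "(a - b)^2 / (2 * (a + b)) \<le> (a + b)^2 / (2 * (a + b))"
    using p by (intro divide_right_mono) auto
  also have "\<dots> = (a + b) / 2" using p by (simp add: power2_eq_square field_simps)
  finally show ?thesis by (simp add: capterm_def)
qed

lemma capterm_scale: assumes "0 \<le> c" shows "capterm (c * a) (c * b) = c * capterm a b"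
proof (cases "c = 0")
  case True then show ?thesis by (simp add: capterm_def)
next
  case False
  have 1: "(c*a - c*b)^2 = c*(c*(a-b)^2)" by (simp add: power2_eq_square algebra_simps)
  have 2: "2*(c*a+c*b) = c*(2*(a+b))" by (simp add: algebra_simps)
  have "capterm (c * a) (c * b) = c*(c*(a-b)^2) / (c*(2*(a+b)))" unfolding capterm_def 1 2 ..
  also have "\<dots> = c*(a-b)^2 / (2*(a+b))" using False by (rule nonzero_mult_divide_mult_cancel_left)
  finally show ?thesis by (simp add: capterm_def)
qed

lemma capterm_same [simp]: "capterm a a = 0" by (simp add: capterm_def)

lemma pmf_summable: "pmf p summable_on A"
proof -
  have "Infinite_Sum.abs_summable_on (pmf p) A"
    using abs_summable_equivalent pmf_abs_summable by blast
  then show ?thesis using abs_summable_summable by blast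
qed

lemma pmf_infsum: "(\<Sum>\<^sub>\<infinity>y. pmf p y) = 1"
  using infsetsum_infsum[OF pmf_abs_summable[of p UNIV]] infsetsum_pmf_eq_1[of p UNIV] by simp

lemma nonneg_summable_le:
  fixes f g :: "'a \<Rightarrow> real"
  assumes "\<And>x. x \<in> A \<Longrightarrow> 0 \<le> f x" "\<And>x. x \<in> A \<Longrightarrow> f x \<le> g x" "g summable_on A"
  shows "f summable_on A"
proof -
  have "Infinite_Sum.abs_summable_on g A" using assms(3) summable_on_iff_abs_summable_on_real by blast
  then have "Infinite_Sum.abs_summable_on f A"
    by (rule Infinite_Sum.abs_summable_on_comparison_test) (use assms in force)
  then show ?thesis using summable_on_iff_abs_summable_on_real by blast
qed

lemma half_sum_summable:
  "(\<lambda>y. pmf p y * (1/2) + pmf q y * (1/2)) summable_on A"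
  by (intro summable_on_add summable_on_cmult_left pmf_summable)

lemma half_sum_infsum:
  "(\<Sum>\<^sub>\<infinity>y. pmf p y * (1/2) + pmf q y * (1/2)) = 1"
proof -
  have s: "\<And>r. (\<lambda>y. pmf r y * (1/2)) summable_on UNIV"
    by (intro summable_on_cmult_left pmf_summable)
  have "(\<Sum>\<^sub>\<infinity>y. pmf p y * (1/2) + pmf q y * (1/2)) = (\<Sum>\<^sub>\<infinity>y. pmf p y * (1/2)) + (\<Sum>\<^sub>\<infinity>y. pmf q y * (1/2))"
    by (rule infsum_add[OF s s])
  also have "\<dots> = 1" by (simp only: infsum_cmult_left' pmf_infsum)
  finally show ?thesis .
qed

lemma cap_summable: "(\<lambda>y. capterm (pmf (W True) y) (pmf (W False) y)) summable_on A"
proof (rule nonneg_summable_le[OF _ _ half_sum_summable[of "W True" "W False"]])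
  fix y
  show "0 \<le> capterm (pmf (W True) y) (pmf (W False) y)" by (simp add: capterm_nonneg)
  show "capterm (pmf (W True) y) (pmf (W False) y) \<le> pmf (W True) y * (1/2) + pmf (W False) y * (1/2)"
    using capterm_le[OF pmf_nonneg pmf_nonneg, of "W True" y "W False" y] by simp
qed

lemma cap_nonneg: "0 \<le> cap W"
  unfolding cap_def by (intro infsum_nonneg capterm_nonneg pmf_nonneg)

lemma cap_le1: "cap W \<le> 1"
proof -
  have "cap W \<le> (\<Sum>\<^sub>\<infinity>y. pmf (W True) y * (1/2) + pmf (W False) y * (1/2))"
    unfolding cap_def
  proof (intro infsum_mono cap_summable half_sum_summable)
    fix y
    show "capterm (pmf (W True) y) (pmf (W False) y) \<le> pmf (W True) y * (1/2) + pmf (W False) y * (1/2)"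
      using capterm_le[OF pmf_nonneg pmf_nonneg, of "W True" y "W False" y] by simp
  qed
  then show ?thesis using half_sum_infsum[of "W True" "W False"] by linarith
qed


lemma pmf_map_inj_on:
  assumes "inj_on f U" "set_pmf p \<subseteq> U" "y \<in> U"
  shows "pmf (map_pmf f p) (f y) = pmf p y"
proof -
  have "pmf (map_pmf f p) (f y) = measure p (f -` {f y})" by (simp add: pmf_map)
  also have "\<dots> = measure p (f -` {f y} \<inter> set_pmf p)" by (simp add: measure_Int_set_pmf)
  also have "f -` {f y} \<inter> set_pmf p = {y} \<inter> set_pmf p" using assms by (auto simp: inj_on_def)
  also have "measure p \<dots> = measure p {y}" by (simp add: measure_Int_set_pmf)
  also have "\<dots> = pmf p y" by (simp add: measure_pmf_single)
  finally show ?thesis .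
qed

lemma pmf_map_notin: "z \<notin> f ` set_pmf p \<Longrightarrow> pmf (map_pmf f p) z = 0"
  by (simp add: pmf_eq_0_set_pmf)

lemma cap_map_inj:
  assumes inj: "inj_on f (set_pmf (W True) \<union> set_pmf (W False))"
  shows "cap (\<lambda>s. map_pmf f (W s)) = cap W"
proof -
  let ?U = "set_pmf (W True) \<union> set_pmf (W False)"
  let ?g = "\<lambda>z. capterm (pmf (map_pmf f (W True)) z) (pmf (map_pmf f (W False)) z)"
  have "cap (\<lambda>s. map_pmf f (W s)) = infsum ?g (f ` ?U)"
    unfolding cap_def
  proof (rule infsum_cong_neutral)
    fix z assume "z \<in> UNIV - f ` ?U"
    then have "z \<notin> f ` set_pmf (W True)" "z \<notin> f ` set_pmf (W False)" by auto
    then show "?g z = 0" by (simp add: pmf_map_notin)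
  qed auto
  also have "\<dots> = infsum (?g \<circ> f) ?U" by (rule infsum_reindex[OF inj])
  also have "\<dots> = infsum (\<lambda>y. capterm (pmf (W True) y) (pmf (W False) y)) ?U"
    by (intro infsum_cong) (simp add: pmf_map_inj_on[OF inj])
  also have "\<dots> = cap W"
    unfolding cap_def
    by (rule infsum_cong_neutral) (auto simp: set_pmf_iff)
  finally show ?thesis .
qed

definition BMS :: "(bool \<Rightarrow> 'y pmf) \<Rightarrow> ('y \<Rightarrow> 'y) \<Rightarrow> bool" where
  "BMS M \<sigma> \<longleftrightarrow> (\<forall>y. \<sigma> (\<sigma> y) = y) \<and> M False = map_pmf \<sigma> (M True)"

lemma BMS_inv: "BMS M \<sigma> \<Longrightarrow> \<sigma> (\<sigma> y) = y" by (simp add: BMS_def)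

lemma BMS_bij: "BMS M \<sigma> \<Longrightarrow> bij \<sigma>"
  by (metis BMS_inv bij_betw_byWitness subset_UNIV)

lemma BMS_inj: "BMS M \<sigma> \<Longrightarrow> inj \<sigma>"
  using BMS_bij bij_is_inj by blast

lemma BMS_flip: assumes "BMS M \<sigma>" shows "M (\<not> x) = map_pmf \<sigma> (M x)"
proof (cases x)
  case True then show ?thesis using assms by (simp add: BMS_def)
next
  case False
  have "map_pmf \<sigma> (M False) = map_pmf (\<sigma> \<circ> \<sigma>) (M True)"
    using assms by (simp add: BMS_def pmf.map_comp)
  also have "\<sigma> \<circ> \<sigma> = id" using BMS_inv[OF assms] by (auto simp: fun_eq_iff)
  finally show ?thesis using False by (simp add: pmf.map_id)
qed

lemma BMS_pmf: assumes "BMS M \<sigma>" shows "pmf (M False) y = pmf (M True) (\<sigma> y)"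
proof -
  have "pmf (M False) y = pmf (map_pmf \<sigma> (M True)) (\<sigma> (\<sigma> y))"
    using assms by (simp add: BMS_def BMS_inv[OF assms])
  also have "\<dots> = pmf (M True) (\<sigma> y)" by (rule pmf_map_inj'[OF BMS_inj[OF assms]])
  finally show ?thesis .
qed

lemma BMS_pmf2: assumes "BMS M \<sigma>" shows "pmf (M True) y = pmf (M False) (\<sigma> y)"
  using BMS_pmf[OF assms, of "\<sigma> y"] BMS_inv[OF assms] by simp

lemma pmf_map_pair: "pmf (map_pmf (\<lambda>y. (y, w')) p) (y, w) = (if w' = w then pmf p y else 0)"
proof (cases "w' = w")
  case True
  then show ?thesis using pmf_map_inj'[of "\<lambda>y. (y, w')" p y] by (simp add: inj_on_def)
next
  case False
  then show ?thesis by (intro trans[OF pmf_map_notin]) auto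
qed

lemma pmf_bind_pair:
  fixes K :: "(bool \<times> 'w) pmf" and N :: "bool \<Rightarrow> 'y pmf"
  shows "pmf (K \<bind> (\<lambda>(x,w'). map_pmf (\<lambda>y. (y, w')) (N x))) (y, w) =
         pmf K (True, w) * pmf (N True) y + pmf K (False, w) * pmf (N False) y"
proof -
  have "pmf (K \<bind> (\<lambda>(x,w'). map_pmf (\<lambda>y. (y, w')) (N x))) (y, w) =
        measure_pmf.expectation K (\<lambda>(x,w'). if w' = w then pmf (N x) y else 0)"
    by (simp add: pmf_bind pmf_map_pair case_prod_unfold)
  also have "\<dots> = (\<Sum>a\<in>{(True,w),(False,w)}. (\<lambda>(x,w'). if w' = w then pmf (N x) y else 0) a * pmf K a)"
    by (rule integral_measure_pmf_real) (auto split: if_splits)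
  also have "\<dots> = pmf K (True, w) * pmf (N True) y + pmf K (False, w) * pmf (N False) y"
    by simp
  finally show ?thesis .
qed

lemma inj_BEC_fun: "inj (\<lambda>b. if b then None else Some x)"
  by (auto simp: inj_def split: if_splits)

lemma pmf_BEC_None: assumes "0 \<le> e" "e \<le> 1" shows "pmf (BEC e x) None = e"
  using pmf_map_inj'[OF inj_BEC_fun[of x], of "bernoulli_pmf e" True] assms by (simp add: BEC_def)

lemma pmf_BEC_Some: assumes "0 \<le> e" "e \<le> 1"
  shows "pmf (BEC e x) (Some x') = (if x' = x then 1 - e else 0)"
proof (cases "x' = x")
  case True
  then show ?thesis
    using pmf_map_inj'[OF inj_BEC_fun[of x], of "bernoulli_pmf e" False] assms by (simp add: BEC_def)
next
  case False
  then show ?thesis unfolding BEC_def by (intro trans[OF pmf_map_notin]) auto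
qed

lemma two_div_two: "2 * (x / (2 * y)) = x / (y::real)"
  by (cases "y = 0") (simp_all add: field_simps)

lemma capterm_2: "2 * capterm a b = (a - b)^2 / (a + b)"
  unfolding capterm_def by (rule two_div_two)

lemma pair_id0:
  fixes a b up um vp vm s C D1 D2 :: real
  assumes e: "s = a + b" "C = vp + vm" "D1 = vp * a + vm * b" "D2 = vp * b + vm * a"
   and n: "s \<noteq> 0" "C \<noteq> 0" "vp \<noteq> 0" "vm \<noteq> 0" "D1 \<noteq> 0" "D2 \<noteq> 0"
  shows "(s/2 - (a-b)^2/(2 * s)) * ((up+um)^2/C) + (a-b)^2/(2 * s) * (up^2/vp + um^2/vm)
     - (up * a+um * b)^2/(2 * D1) - (up * b+um * a)^2/(2 * D2)
     = (a-b)^2 * a * b * (vp-vm)^2 * (um * vp-up * vm)^2/(2 * s * C * vp * vm * D1 * D2)"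
proof -
  have "(s/2 - (a-b)^2/(2 * s)) * ((up+um)^2/C) + (a-b)^2/(2 * s) * (up^2/vp + um^2/vm)
     - (up * a+um * b)^2/(2 * D1) - (up * b+um * a)^2/(2 * D2) - 
     (a-b)^2 * a * b * (vp-vm)^2 * (um * vp-up * vm)^2/(2 * s * C * vp * vm * D1 * D2) = 0"
    using n by (simp add: field_simps) (use e in algebra)
  then show ?thesis by simp
qed

lemma pair_ineq:
  fixes p1 p2 q1 q2 a b :: real
  assumes nn: "0 \<le> p1" "0 \<le> p2" "0 \<le> q1" "0 \<le> q2" "0 \<le> a" "0 \<le> b"
  shows "capterm (p1 * a + p2 * b) (q1 * a + q2 * b) + capterm (p1 * b + p2 * a) (q1 * b + q2 * a)
     \<le> 2 * ((a + b) / 2 - capterm a b) * capterm (p1 + p2) (q1 + q2)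
        + 2 * capterm a b * (capterm p1 q1 + capterm p2 q2)"
proof -
  consider "a + b = 0" | "a + b \<noteq> 0" "p1 + q1 = 0" | "a + b \<noteq> 0" "p2 + q2 = 0"
    | "a + b \<noteq> 0" "p1 + q1 \<noteq> 0" "p2 + q2 \<noteq> 0" by blast
  then show ?thesis
  proof cases
    case 1
    then have "a = 0" "b = 0" using nn by auto
    then show ?thesis by (simp add: capterm_def)
  next
    case 2
    then have z: "p1 = 0" "q1 = 0" using nn by auto
    have l: "capterm (p2 * b) (q2 * b) = b * capterm p2 q2" "capterm (p2 * a) (q2 * a) = a * capterm p2 q2"
      using capterm_scale[OF nn(6), of p2 q2] capterm_scale[OF nn(5), of p2 q2] by (simp_all add: mult.commute)
    show ?thesis using l z by (simp add: algebra_simps)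
  next
    case 3
    then have z: "p2 = 0" "q2 = 0" using nn by auto
    have l: "capterm (p1 * b) (q1 * b) = b * capterm p1 q1" "capterm (p1 * a) (q1 * a) = a * capterm p1 q1"
      using capterm_scale[OF nn(6), of p1 q1] capterm_scale[OF nn(5), of p1 q1] by (simp_all add: mult.commute)
    show ?thesis using l z by (simp add: algebra_simps)
  next
    case 4
    define up where "up = p1 - q1"
    define um where "um = p2 - q2"
    define vp where "vp = p1 + q1"
    define vm where "vm = p2 + q2"
    define s where "s = a + b"
    define C where "C = vp + vm"
    define D1 where "D1 = vp * a + vm * b"
    define D2 where "D2 = vp * b + vm * a"
    have vpos: "vp > 0" "vm > 0" using 4 nn by (auto simp: vp_def vm_def)
    have spos: "s > 0" using 4 nn by (auto simp: s_def)
    have D1pos: "D1 > 0" unfolding D1_def using vpos nn spos s_def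
      by (smt (verit, best) mult_nonneg_nonneg mult_pos_pos)
    have D2pos: "D2 > 0" unfolding D2_def using vpos nn spos s_def
      by (smt (verit, best) mult_nonneg_nonneg mult_pos_pos)
    have Cpos: "C > 0" using vpos by (simp add: C_def)
    have id: "(s/2 - (a-b)^2/(2 * s)) * ((up+um)^2/C) + (a-b)^2/(2 * s) * (up^2/vp + um^2/vm)
     - (up * a+um * b)^2/(2 * D1) - (up * b+um * a)^2/(2 * D2)
     = (a-b)^2 * a * b * (vp-vm)^2 * (um * vp-up * vm)^2/(2 * s * C * vp * vm * D1 * D2)"
      by (rule pair_id0) (use vpos spos D1pos D2pos Cpos in \<open>auto simp: s_def C_def D1_def D2_def\<close>)
    have cert: "(a-b)^2 * a * b * (vp-vm)^2 * (um * vp-up * vm)^2/(2 * s * C * vp * vm * D1 * D2) \<ge> 0"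
      using vpos spos D1pos D2pos Cpos nn by (intro divide_nonneg_nonneg) auto
    have e1: "capterm (p1 * a + p2 * b) (q1 * a + q2 * b) = (up * a+um * b)^2/(2 * D1)"
      unfolding capterm_def up_def um_def D1_def vp_def vm_def by (simp add: algebra_simps)
    have e2: "capterm (p1 * b + p2 * a) (q1 * b + q2 * a) = (up * b+um * a)^2/(2 * D2)"
      unfolding capterm_def up_def um_def D2_def vp_def vm_def by (simp add: algebra_simps)
    have e3: "capterm a b = (a-b)^2/(2 * s)" by (simp add: capterm_def s_def)
    have e4: "2 * capterm (p1 + p2) (q1 + q2) = (up+um)^2/C"
      unfolding capterm_2 up_def um_def C_def vp_def vm_def by (simp add: algebra_simps)
    have e5: "2 * (capterm p1 q1 + capterm p2 q2) = up^2/vp + um^2/vm"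
      unfolding distrib_left capterm_2 up_def um_def vp_def vm_def by (simp add: algebra_simps)
    have r1: "(s/2 - (a-b)^2/(2 * s)) * ((up+um)^2/C) + (a-b)^2/(2 * s) * (up^2/vp + um^2/vm)
       = (s/2 - capterm a b) * (2 * capterm (p1 + p2) (q1 + q2)) + capterm a b * (2 * (capterm p1 q1 + capterm p2 q2))"
      by (simp only: e3 e4 e5)
    have r2: "(s/2 - capterm a b) * (2 * capterm (p1 + p2) (q1 + q2)) + capterm a b * (2 * (capterm p1 q1 + capterm p2 q2))
       = 2 * ((a + b) / 2 - capterm a b) * capterm (p1 + p2) (q1 + q2)
        + 2 * capterm a b * (capterm p1 q1 + capterm p2 q2)"
      by (simp add: s_def algebra_simps)
    show ?thesis using id cert e1 e2 r1 r2 by linarith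
  qed
qed

lemma pair_fubini:
  fixes f :: "'a \<times> 'b \<Rightarrow> real"
  assumes "f summable_on UNIV"
  shows "infsum f UNIV = (\<Sum>\<^sub>\<infinity>w. \<Sum>\<^sub>\<infinity>e. f (e, w))"
    and "(\<lambda>w. \<Sum>\<^sub>\<infinity>e. f (e, w)) summable_on UNIV"
proof -
  have bij: "bij_betw prod.swap (UNIV :: ('b \<times> 'a) set) UNIV"
    by (simp add: bij_betw_def)
  have sw: "(\<lambda>z. f (prod.swap z)) summable_on (UNIV :: ('b \<times> 'a) set)"
    using summable_on_reindex_bij_betw[OF bij, of f] assms by simp
  then have sw': "(\<lambda>(w, e). f (e, w)) summable_on (Sigma (UNIV :: 'b set) (\<lambda>_. UNIV))"
    by (simp add: case_prod_unfold prod.swap_def)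
  have "infsum f UNIV = infsum (\<lambda>z. f (prod.swap z)) (UNIV :: ('b \<times> 'a) set)"
    using infsum_reindex_bij_betw[OF bij, of f] by simp
  also have "\<dots> = infsum (\<lambda>(w, e). f (e, w)) (Sigma (UNIV :: 'b set) (\<lambda>_. UNIV))"
    by (simp add: case_prod_unfold prod.swap_def)
  also have "\<dots> = (\<Sum>\<^sub>\<infinity>w. \<Sum>\<^sub>\<infinity>e. f (e, w))"
    using infsum_Sigma'_banach[of "\<lambda>w e. f (e, w)" UNIV "\<lambda>_. UNIV"] sw' by simp
  finally show "infsum f UNIV = (\<Sum>\<^sub>\<infinity>w. \<Sum>\<^sub>\<infinity>e. f (e, w))" .
  show "(\<lambda>w. \<Sum>\<^sub>\<infinity>e. f (e, w)) summable_on UNIV"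
    using summable_on_Sigma_banach[of "\<lambda>w e. f (e, w)" UNIV "\<lambda>_. UNIV"] sw' by simp
qed

lemma replace_one:
  fixes K :: "bool \<Rightarrow> (bool \<times> 'w) pmf" and M :: "bool \<Rightarrow> 'y pmf"
  assumes bms: "BMS M \<sigma>"
  shows "cap (\<lambda>s. K s \<bind> (\<lambda>(x,w). map_pmf (\<lambda>y. (y,w)) (M x)))
       \<le> cap (\<lambda>s. K s \<bind> (\<lambda>(x,w). map_pmf (\<lambda>e. (e,w)) (BEC (1 - cap M) x)))"
proof -
  define \<eta> where "\<eta> = cap M"
  have \<eta>0: "0 \<le> \<eta>" unfolding \<eta>_def by (rule cap_nonneg)
  have \<eta>1: "\<eta> \<le> 1" unfolding \<eta>_def by (rule cap_le1)
  define L where "L = (\<lambda>s. K s \<bind> (\<lambda>(x,w). map_pmf (\<lambda>y. (y,w)) (M x)))"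
  define R where "R = (\<lambda>s. K s \<bind> (\<lambda>(x,w). map_pmf (\<lambda>e. (e,w)) (BEC (1 - \<eta>) x)))"
  define k where "k s x w = pmf (K s) (x, w)" for s x w
  define a where "a y = pmf (M True) y" for y
  define b where "b y = pmf (M False) y" for y
  define G where "G w y = capterm (k True True w * a y + k True False w * b y)
                                  (k False True w * a y + k False False w * b y)" for w y
  define F where "F w e = capterm (pmf (R True) (e,w)) (pmf (R False) (e,w))" for w e
  have Lpmf: "pmf (L s) (y,w) = k s True w * a y + k s False w * b y" for s y w
    unfolding L_def k_def a_def b_def by (rule pmf_bind_pair)
  have Rpmf: "pmf (R s) (e,w) = k s True w * pmf (BEC (1-\<eta>) True) e + k s False w * pmf (BEC (1-\<eta>) False) e" for s e w
    unfolding R_def k_def by (rule pmf_bind_pair)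
  have fubL: "cap L = (\<Sum>\<^sub>\<infinity>w. \<Sum>\<^sub>\<infinity>y. capterm (pmf (L True) (y,w)) (pmf (L False) (y,w)))"
    unfolding cap_def by (rule pair_fubini(1)[OF cap_summable])
  have capL: "cap L = (\<Sum>\<^sub>\<infinity>w. \<Sum>\<^sub>\<infinity>y. G w y)"
    unfolding fubL by (simp add: Lpmf G_def)
  have sumL0: "(\<lambda>w. \<Sum>\<^sub>\<infinity>y. capterm (pmf (L True) (y,w)) (pmf (L False) (y,w))) summable_on UNIV"
    by (rule pair_fubini(2)[OF cap_summable])
  have sumL: "(\<lambda>w. \<Sum>\<^sub>\<infinity>y. G w y) summable_on UNIV"
    using sumL0 by (simp add: Lpmf G_def)
  have capR: "cap R = (\<Sum>\<^sub>\<infinity>w. \<Sum>\<^sub>\<infinity>e. F w e)"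
    unfolding cap_def F_def by (rule pair_fubini(1)[OF cap_summable])
  have sumR: "(\<lambda>w. \<Sum>\<^sub>\<infinity>e. F w e) summable_on UNIV"
    unfolding F_def by (rule pair_fubini(2)[OF cap_summable])
  have RN: "pmf (R s) (None,w) = (1-\<eta>) * (k s True w + k s False w)" for s w
    by (simp add: Rpmf pmf_BEC_None \<eta>0 \<eta>1 algebra_simps)
  have RT: "pmf (R s) (Some True,w) = \<eta> * k s True w" for s w
    by (simp add: Rpmf pmf_BEC_Some \<eta>0 \<eta>1 algebra_simps)
  have RF: "pmf (R s) (Some False,w) = \<eta> * k s False w" for s w
    by (simp add: Rpmf pmf_BEC_Some \<eta>0 \<eta>1 algebra_simps)
  have Fw: "(\<Sum>\<^sub>\<infinity>e. F w e) = (1-\<eta>) * capterm (k True True w + k True False w) (k False True w + k False False w)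
        + \<eta> * (capterm (k True True w) (k False True w) + capterm (k True False w) (k False False w))" for w
  proof -
    have "(\<Sum>\<^sub>\<infinity>e. F w e) = (\<Sum>e\<in>UNIV. F w e)" by (simp add: infsum_finite)
    also have "\<dots> = F w None + (F w (Some True) + F w (Some False))"
      by (simp add: UNIV_option_conv UNIV_bool)
    also have "F w None = (1-\<eta>) * capterm (k True True w + k True False w) (k False True w + k False False w)"
      unfolding F_def RN using \<eta>1 by (intro capterm_scale) simp
    also have "F w (Some True) = \<eta> * capterm (k True True w) (k False True w)"
      unfolding F_def RT using \<eta>0 by (intro capterm_scale) simp
    also have "F w (Some False) = \<eta> * capterm (k True False w) (k False False w)"
      unfolding F_def RF using \<eta>0 by (intro capterm_scale) simp
    finally show ?thesis by (simp add: algebra_simps)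
  qed
  have per: "(\<Sum>\<^sub>\<infinity>y. G w y) \<le> (\<Sum>\<^sub>\<infinity>e. F w e)" for w
  proof -
    define p1 where "p1 = k True True w"
    define p2 where "p2 = k True False w"
    define q1 where "q1 = k False True w"
    define q2 where "q2 = k False False w"
    define C0 where "C0 = capterm (p1 + p2) (q1 + q2)"
    define C1 where "C1 = capterm p1 q1 + capterm p2 q2"
    have nn: "0 \<le> p1" "0 \<le> p2" "0 \<le> q1" "0 \<le> q2" by (simp_all add: p1_def p2_def q1_def q2_def k_def)
    have ab: "0 \<le> a y" "0 \<le> b y" for y by (simp_all add: a_def b_def)
    define c where "c y = capterm (a y) (b y)" for y
    define G' where "G' y = capterm (p1 * b y + p2 * a y) (q1 * b y + q2 * a y)" for y
    have Gd: "G w y = capterm (p1 * a y + p2 * b y) (q1 * a y + q2 * b y)" for y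
      by (simp add: G_def p1_def p2_def q1_def q2_def)
    have asig: "a (\<sigma> y) = b y" for y unfolding a_def b_def by (simp add: BMS_pmf[OF bms])
    have bsig: "b (\<sigma> y) = a y" for y unfolding a_def b_def by (simp add: BMS_pmf2[OF bms])
    have G'eq: "G' y = G w (\<sigma> y)" for y by (simp add: G'_def Gd asig bsig)
    have bij: "bij_betw \<sigma> UNIV UNIV" using BMS_bij[OF bms] by simp
    have Gsum: "(\<lambda>y. G w y) summable_on UNIV"
    proof (rule nonneg_summable_le)
      fix y
      show "0 \<le> G w y" unfolding Gd using nn ab[of y] by (intro capterm_nonneg) auto
      show "G w y \<le> ((p1 + q1) / 2) * a y + ((p2 + q2) / 2) * b y"
        unfolding Gd using capterm_le[of "p1 * a y + p2 * b y" "q1 * a y + q2 * b y"] nn ab[of y]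
        by (simp add: algebra_simps add_divide_distrib)
      show "(\<lambda>y. ((p1 + q1) / 2) * a y + ((p2 + q2) / 2) * b y) summable_on UNIV"
        unfolding a_def b_def by (intro summable_on_add summable_on_cmult_right pmf_summable)
    qed
    have G'sum: "G' summable_on UNIV"
      using summable_on_reindex_bij_betw[OF bij, of "G w"] Gsum G'eq by (simp add: G'eq[abs_def])
    have G'inf: "(\<Sum>\<^sub>\<infinity>y. G' y) = (\<Sum>\<^sub>\<infinity>y. G w y)"
      using infsum_reindex_bij_betw[OF bij, of "G w"] by (simp add: G'eq)
    define H where "H y = (a y * (1/2) + b y * (1/2)) * (2*C0) + c y * (2*C1 - 2*C0)" for y
    have pt: "G w y + G' y \<le> H y" for y
    proof -
      have "G w y + G' y \<le> 2 * ((a y + b y) / 2 - c y) * C0 + 2 * c y * C1"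
        unfolding Gd G'_def c_def C0_def C1_def by (rule pair_ineq[OF nn ab[of y]])
      moreover have "2 * ((a y + b y) / 2 - c y) * C0 + 2 * c y * C1 = H y"
        unfolding H_def by (simp add: field_simps)
      ultimately show ?thesis by linarith
    qed
    have hs: "(\<lambda>y. a y * (1/2) + b y * (1/2)) summable_on UNIV"
      unfolding a_def b_def by (rule half_sum_summable)
    have cs: "c summable_on UNIV" unfolding c_def a_def b_def by (rule cap_summable)
    have Hsum: "H summable_on UNIV"
      unfolding H_def by (intro summable_on_add summable_on_cmult_left hs cs)
    have Hinf: "(\<Sum>\<^sub>\<infinity>y. H y) = 2*C0 + \<eta> * (2*C1 - 2*C0)"
    proof -
      have "(\<Sum>\<^sub>\<infinity>y. H y) = (\<Sum>\<^sub>\<infinity>y. (a y * (1/2) + b y * (1/2)) * (2*C0)) + (\<Sum>\<^sub>\<infinity>y. c y * (2*C1 - 2*C0))"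
        unfolding H_def by (intro infsum_add summable_on_cmult_left hs cs)
      also have "\<dots> = (\<Sum>\<^sub>\<infinity>y. a y * (1/2) + b y * (1/2)) * (2*C0) + (\<Sum>\<^sub>\<infinity>y. c y) * (2*C1 - 2*C0)"
        by (simp only: infsum_cmult_left')
      also have "(\<Sum>\<^sub>\<infinity>y. a y * (1/2) + b y * (1/2)) = 1"
        unfolding a_def b_def by (rule half_sum_infsum)
      also have "(\<Sum>\<^sub>\<infinity>y. c y) = \<eta>" unfolding \<eta>_def cap_def c_def a_def b_def ..
      finally show ?thesis by simp
    qed
    have "2 * (\<Sum>\<^sub>\<infinity>y. G w y) = (\<Sum>\<^sub>\<infinity>y. G w y) + (\<Sum>\<^sub>\<infinity>y. G' y)" using G'inf by simp
    also have "\<dots> = (\<Sum>\<^sub>\<infinity>y. G w y + G' y)" by (rule infsum_add[symmetric, OF Gsum G'sum])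
    also have "\<dots> \<le> (\<Sum>\<^sub>\<infinity>y. H y)"
      by (rule infsum_mono[OF summable_on_add[OF Gsum G'sum] Hsum pt])
    finally have "2 * (\<Sum>\<^sub>\<infinity>y. G w y) \<le> 2*C0 + \<eta> * (2*C1 - 2*C0)" using Hinf by simp
    then show ?thesis unfolding Fw by (simp add: C0_def C1_def p1_def p2_def q1_def q2_def algebra_simps)
  qed
  have "cap L \<le> cap R" unfolding capL capR by (rule infsum_mono[OF sumL sumR per])
  then show ?thesis unfolding L_def R_def \<eta>_def .
qed

lemma seq_pmf_snoc: "seq_pmf (ps @ [p]) = seq_pmf ps \<bind> (\<lambda>ys. map_pmf (\<lambda>y. ys @ [y]) p)"
proof (induction ps)
  case Nil
  then show ?case by (simp add: bind_return_pmf map_pmf_def)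
next
  case (Cons q ps)
  then show ?case by (simp add: map_bind_pmf bind_assoc_pmf bind_map_pmf pmf.map_comp o_def)
qed

lemma seq_pmf_map_map: "seq_pmf (map (map_pmf f) ps) = map_pmf (map f) (seq_pmf ps)"
  by (induction ps) (simp_all add: map_bind_pmf bind_map_pmf pmf.map_comp o_def)

lemma set_seq_pmf_length: "ys \<in> set_pmf (seq_pmf ps) \<Longrightarrow> length ys = length ps"
  by (induction ps arbitrary: ys) auto

lemma seq_snoc_map:
  assumes "xs \<noteq> []"
  shows "map_pmf h (seq_pmf (map N xs)) =
         N (last xs) \<bind> (\<lambda>y. map_pmf (\<lambda>ys. h (ys @ [y])) (seq_pmf (map N (butlast xs))))"
proof -
  have "xs = butlast xs @ [last xs]" using assms by simp
  then have "map N xs = map N (butlast xs) @ [N (last xs)]" by (metis map_append list.map(1) list.map(2))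
  then have "map_pmf h (seq_pmf (map N xs)) =
     map_pmf h (seq_pmf (map N (butlast xs)) \<bind> (\<lambda>ys. map_pmf (\<lambda>y. ys @ [y]) (N (last xs))))"
    by (simp add: seq_pmf_snoc)
  also have "\<dots> = seq_pmf (map N (butlast xs)) \<bind> (\<lambda>ys. N (last xs) \<bind> (\<lambda>y. return_pmf (h (ys @ [y]))))"
    by (simp add: map_pmf_def bind_assoc_pmf bind_return_pmf)
  also have "\<dots> = N (last xs) \<bind> (\<lambda>y. seq_pmf (map N (butlast xs)) \<bind> (\<lambda>ys. return_pmf (h (ys @ [y]))))"
    by (rule bind_commute_pmf)
  also have "\<dots> = N (last xs) \<bind> (\<lambda>y. map_pmf (\<lambda>ys. h (ys @ [y])) (seq_pmf (map N (butlast xs))))"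
    by (simp add: map_pmf_def)
  finally show ?thesis .
qed

lemma seq_bind_snoc:
  assumes "xs \<noteq> []"
  shows "seq_pmf (map N xs) \<bind> (\<lambda>x. return_pmf (h x)) =
         seq_pmf (map N (butlast xs)) \<bind> (\<lambda>x. N (last xs) \<bind> (\<lambda>xa. return_pmf (h (x @ [xa]))))"
proof -
  have "xs = butlast xs @ [last xs]" using assms by simp
  then have "map N xs = map N (butlast xs) @ [N (last xs)]" by (metis map_append list.map(1) list.map(2))
  then show ?thesis by (simp add: seq_pmf_snoc bind_assoc_pmf map_pmf_def bind_return_pmf)
qed

definition obsM :: "(bool \<Rightarrow> 'y pmf) \<Rightarrow> (bool \<Rightarrow> (bool list \<times> ('y + bool option) list) pmf) \<Rightarrow> bool \<Rightarrow> ('y + bool option) list pmf" where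
  "obsM M J s = J s \<bind> (\<lambda>(xs, zs). map_pmf (\<lambda>ys. map Inl ys @ zs) (seq_pmf (map M xs)))"

definition obsE :: "real \<Rightarrow> (bool \<Rightarrow> (bool list \<times> ('y + bool option) list) pmf) \<Rightarrow> bool \<Rightarrow> ('y + bool option) list pmf" where
  "obsE e J s = J s \<bind> (\<lambda>(xs, zs). map_pmf (\<lambda>es. map Inr es @ zs) (seq_pmf (map (BEC e) xs)))"

lemma inj_on_prefix:
  fixes g :: "'d \<Rightarrow> 'a + 'b"
  assumes "inj g"
  shows "inj_on (\<lambda>(y, (es :: 'b list, zs :: ('a + 'b) list)). map Inr es @ g y # zs) {(y, (es, zs)). length es = n}"
proof -
  have h: "y = y' \<and> es = es' \<and> zs = zs'" if l: "length es = length es'"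
    and eq: "map (Inr :: 'b \<Rightarrow> 'a + 'b) es @ g y # zs = map Inr es' @ g y' # zs'" for y y' es es' zs zs'
  proof -
    have "map (Inr :: 'b \<Rightarrow> 'a + 'b) es = map Inr es' \<and> g y # zs = g y' # zs'"
      using eq l by (subst (asm) append_eq_append_conv) auto
    then show ?thesis using assms by (auto simp: inj_eq list.inj_map_strong)
  qed
  show ?thesis unfolding inj_on_def using h by auto
qed

lemma list_replace:
  assumes bms: "BMS M \<sigma>"
  shows "(\<And>s p. p \<in> set_pmf (J s) \<Longrightarrow> length (fst p) = n) \<Longrightarrow> cap (obsM M J) \<le> cap (obsE (1 - cap M) J)"
proof (induction n arbitrary: J)
  case 0
  have "obsM M J = obsE (1 - cap M) J"
  proof (rule ext)
    fix s
    show "obsM M J s = obsE (1 - cap M) J s"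
      unfolding obsM_def obsE_def
    proof (rule bind_pmf_cong[OF refl])
      fix p assume "p \<in> set_pmf (J s)"
      then have "fst p = []" using 0 by auto
      then show "(case p of (xs, zs) \<Rightarrow> map_pmf (\<lambda>ys. map Inl ys @ zs) (seq_pmf (map M xs))) =
                 (case p of (xs, zs) \<Rightarrow> map_pmf (\<lambda>es. map Inr es @ zs) (seq_pmf (map (BEC (1 - cap M)) xs)))"
        by (auto simp: case_prod_unfold)
    qed
  qed
  then show ?case by simp
next
  case (Suc n)
  define \<eta> where "\<eta> = 1 - cap M"
  define J' where "J' s = J s \<bind> (\<lambda>(xs,zs). map_pmf (\<lambda>y. (butlast xs, Inl y # zs)) (M (last xs)))" for s
  have lenJ: "\<And>s p. p \<in> set_pmf (J s) \<Longrightarrow> length (fst p) = Suc n" by (rule Suc.prems)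
  have lenJ': "length (fst p) = n" if "p \<in> set_pmf (J' s)" for s p
    using that lenJ[of _ s] unfolding J'_def by (auto simp: case_prod_unfold)
  have A: "obsM M J s = obsM M J' s" for s
    unfolding obsM_def J'_def bind_assoc_pmf
  proof (rule bind_pmf_cong[OF refl])
    fix p assume "p \<in> set_pmf (J s)"
    then have ne: "fst p \<noteq> []" using lenJ[of p s] by auto
    obtain xs zs where p: "p = (xs, zs)" by (cases p)
    show "(case p of (xs, zs) \<Rightarrow> map_pmf (\<lambda>ys. map Inl ys @ zs) (seq_pmf (map M xs))) =
          (case p of (xs, zs) \<Rightarrow> map_pmf (\<lambda>y. (butlast xs, Inl y # zs)) (M (last xs))) \<bind>
          (\<lambda>(xs, zs). map_pmf (\<lambda>ys. map Inl ys @ zs) (seq_pmf (map M xs)))"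
      using ne unfolding p by (simp add: seq_snoc_map bind_map_pmf)
  qed
  have IH: "cap (obsM M J') \<le> cap (obsE \<eta> J')"
    unfolding \<eta>_def by (rule Suc.IH) (rule lenJ')
  define K where "K s = J s \<bind> (\<lambda>(xs,zs). map_pmf (\<lambda>es. (last xs, (es, zs))) (seq_pmf (map (BEC \<eta>) (butlast xs))))" for s
  define f1 where "f1 = (\<lambda>(y::'a, (es::bool option list, zs::('a + bool option) list)). map Inr es @ Inl y # zs)"
  define f2 where "f2 = (\<lambda>(e::bool option, (es::bool option list, zs::('a + bool option) list)). map Inr es @ Inr e # zs)"
  have B: "obsE \<eta> J' s = map_pmf f1 (K s \<bind> (\<lambda>(x,w). map_pmf (\<lambda>y. (y,w)) (M x)))" for s
    unfolding obsE_def J'_def K_def bind_assoc_pmf map_bind_pmf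
    apply (rule bind_pmf_cong[OF refl])
    apply (clarsimp simp: bind_map_pmf map_bind_pmf pmf.map_comp o_def f1_def map_pmf_def bind_assoc_pmf bind_return_pmf)
    apply (rule bind_commute_pmf)
    done
  have C: "obsE \<eta> J s = map_pmf f2 (K s \<bind> (\<lambda>(x,w). map_pmf (\<lambda>e. (e,w)) (BEC \<eta> x)))" for s
    unfolding obsE_def K_def bind_assoc_pmf map_bind_pmf
  proof (rule bind_pmf_cong[OF refl], clarsimp simp: bind_map_pmf map_bind_pmf pmf.map_comp o_def f2_def map_pmf_def bind_assoc_pmf bind_return_pmf)
    fix a b assume "(a, b) \<in> set_pmf (J s)"
    then have "a \<noteq> []" using lenJ by fastforce
    then show "seq_pmf (map (BEC \<eta>) a) \<bind> (\<lambda>x. return_pmf (map Inr x @ b)) =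
       seq_pmf (map (BEC \<eta>) (butlast a)) \<bind> (\<lambda>x. BEC \<eta> (last a) \<bind> (\<lambda>xa. return_pmf (map Inr x @ Inr xa # b)))"
      by (simp add: seq_bind_snoc)
  qed
  have supp: "set_pmf (K s) \<subseteq> {(x, (es, zs)). length es = n}" for s
    using lenJ[of _ s] unfolding K_def by (auto simp: case_prod_unfold dest!: set_seq_pmf_length)
  have inj1: "inj_on f1 (set_pmf (K True \<bind> (\<lambda>(x,w). map_pmf (\<lambda>y. (y,w)) (M x))) \<union>
                        set_pmf (K False \<bind> (\<lambda>(x,w). map_pmf (\<lambda>y. (y,w)) (M x))))"
    unfolding f1_def by (rule inj_on_subset[OF inj_on_prefix[OF inj_Inl, where n=n]]) (auto simp: case_prod_unfold dest: subsetD[OF supp])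
  have inj2: "inj_on f2 (set_pmf (K True \<bind> (\<lambda>(x,w). map_pmf (\<lambda>e. (e,w)) (BEC \<eta> x))) \<union>
                        set_pmf (K False \<bind> (\<lambda>(x,w). map_pmf (\<lambda>e. (e,w)) (BEC \<eta> x))))"
    unfolding f2_def by (rule inj_on_subset[OF inj_on_prefix[OF inj_Inr, where n=n]]) (auto simp: case_prod_unfold dest: subsetD[OF supp])
  have "cap (obsM M J) = cap (obsM M J')" using A by presburger
  also have "\<dots> \<le> cap (obsE \<eta> J')" by (rule IH)
  also have "\<dots> = cap (\<lambda>s. K s \<bind> (\<lambda>(x,w). map_pmf (\<lambda>y. (y,w)) (M x)))"
    unfolding B by (rule cap_map_inj[OF inj1])
  also have "\<dots> \<le> cap (\<lambda>s. K s \<bind> (\<lambda>(x,w). map_pmf (\<lambda>e. (e,w)) (BEC \<eta> x)))"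
    unfolding \<eta>_def by (rule replace_one[OF bms])
  also have "\<dots> = cap (obsE \<eta> J)"
    unfolding C by (rule cap_map_inj[OF inj2, symmetric])
  finally show ?case unfolding \<eta>_def .
qed

lemma integrable_pmf_iff_summable:
  fixes f :: "'a \<Rightarrow> real"
  shows "integrable (measure_pmf p) f \<longleftrightarrow> (\<lambda>x. pmf p x * f x) summable_on UNIV"
proof -
  have "integrable (measure_pmf p) f \<longleftrightarrow> integrable (count_space UNIV) (\<lambda>x. pmf p x * f x)"
    unfolding measure_pmf_eq_density by (subst integrable_density) auto
  also have "\<dots> \<longleftrightarrow> Infinite_Set_Sum.abs_summable_on (\<lambda>x. pmf p x * f x) UNIV"
    by (simp add: Infinite_Set_Sum.abs_summable_on_def)
  also have "\<dots> \<longleftrightarrow> (\<lambda>x. pmf p x * f x) summable_on UNIV"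
  proof -
    have 1: "(\<lambda>x. pmf p x * f x) summable_on UNIV \<longleftrightarrow> Infinite_Sum.abs_summable_on (\<lambda>x. pmf p x * f x) UNIV"
      by (rule summable_on_iff_abs_summable_on_real)
    have 2: "Infinite_Sum.abs_summable_on (\<lambda>x. pmf p x * f x) UNIV \<longleftrightarrow> Infinite_Set_Sum.abs_summable_on (\<lambda>x. pmf p x * f x) UNIV"
      by (rule abs_summable_equivalent)
    show ?thesis using 1 2 by argo
  qed
  finally show ?thesis .
qed

lemma exp_pmf_infsum:
  fixes f :: "'a \<Rightarrow> real"
  assumes "integrable (measure_pmf p) f"
  shows "measure_pmf.expectation p f = (\<Sum>\<^sub>\<infinity>x. pmf p x * f x)"
proof -
  have s: "(\<lambda>x. pmf p x * f x) summable_on UNIV" using assms integrable_pmf_iff_summable by blast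
  then have a: "Infinite_Set_Sum.abs_summable_on (\<lambda>x. pmf p x * f x) UNIV"
    using assms integrable_pmf_iff_summable[of p f] unfolding measure_pmf_eq_density
    by (subst (asm) integrable_density) (auto simp: Infinite_Set_Sum.abs_summable_on_def)
  have "measure_pmf.expectation p f = integral\<^sup>L (count_space UNIV) (\<lambda>x. pmf p x * f x)"
    unfolding measure_pmf_eq_density by (subst integral_density) auto
  also have "\<dots> = infsetsum (\<lambda>x. pmf p x * f x) UNIV" by (simp add: infsetsum_def)
  also have "\<dots> = (\<Sum>\<^sub>\<infinity>x. pmf p x * f x)" by (rule infsetsum_infsum[OF a])
  finally show ?thesis .
qed

lemma pmf_map_Cons: "pmf (map_pmf (Cons y) S) (z # r) = (if y = z then pmf S r else 0)"
proof (cases "y = z")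
  case True
  then show ?thesis using pmf_map_inj'[of "Cons y" S r] by (simp add: inj_on_def)
next
  case False
  then show ?thesis by (intro trans[OF pmf_map_notin]) auto
qed

lemma pmf_seq_BEC_None:
  assumes "0 \<le> e" "e \<le> 1"
  shows "pmf (seq_pmf (map (BEC e) xs)) (replicate (length xs) None) = e ^ length xs"
proof (induction xs)
  case Nil then show ?case by simp
next
  case (Cons x xs)
  have "pmf (seq_pmf (map (BEC e) (x # xs))) (replicate (length (x # xs)) None)
      = measure_pmf.expectation (BEC e x) (\<lambda>y. if y = None then pmf (seq_pmf (map (BEC e) xs)) (replicate (length xs) None) else 0)"
    by (simp add: pmf_bind pmf_map_Cons)
  also have "\<dots> = (\<Sum>a\<in>{None}. (\<lambda>y. if y = None then pmf (seq_pmf (map (BEC e) xs)) (replicate (length xs) None) else 0) a * pmf (BEC e x) a)"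
    by (rule integral_measure_pmf_real) (auto split: if_splits)
  also have "\<dots> = e ^ length (x # xs)" using Cons assms by (simp add: pmf_BEC_None)
  finally show ?case .
qed

lemma BEC_bound:
  fixes J :: "bool \<Rightarrow> 'a list pmf"
  assumes e0: "0 \<le> \<epsilon>" and e1: "\<epsilon> \<le> 1"
    and len: "\<And>s xs. xs \<in> set_pmf (J s) \<Longrightarrow> length xs = n"
  shows "cap (\<lambda>s. J s \<bind> (\<lambda>xs. seq_pmf (map (BEC (1 - \<epsilon>)) xs))) \<le> real n * \<epsilon>"
proof -
  define W where "W s = J s \<bind> (\<lambda>xs. seq_pmf (map (BEC (1 - \<epsilon>)) xs))" for s
  define z0 where "z0 = (replicate n None :: 'a option list)"
  have pz0: "pmf (W s) z0 = (1 - \<epsilon>) ^ n" for s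
  proof -
    have "pmf (W s) z0 = measure_pmf.expectation (J s) (\<lambda>xs. pmf (seq_pmf (map (BEC (1 - \<epsilon>)) xs)) z0)"
      by (simp add: W_def pmf_bind)
    also have "\<dots> = measure_pmf.expectation (J s) (\<lambda>_. (1 - \<epsilon>) ^ n)"
    proof (rule integral_cong_AE)
      show "AE x in measure_pmf (J s). pmf (seq_pmf (map (BEC (1 - \<epsilon>)) x)) z0 = (1 - \<epsilon>) ^ n"
        unfolding AE_measure_pmf_iff
      proof
        fix xs assume "xs \<in> set_pmf (J s)"
        then have "length xs = n" by (rule len)
        then show "pmf (seq_pmf (map (BEC (1 - \<epsilon>)) xs)) z0 = (1 - \<epsilon>) ^ n"
          using pmf_seq_BEC_None[of "1 - \<epsilon>" xs] e0 e1 by (simp add: z0_def)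
      qed
    qed auto
    also have "\<dots> = (1 - \<epsilon>) ^ n" by simp
    finally show ?thesis .
  qed
  define c where "c = (1 - \<epsilon>) ^ n"
  define h where "h y = (pmf (W True) y * (1/2) + pmf (W False) y * (1/2)) + - (if y = z0 then c else 0)" for y
  have s1: "(\<lambda>y. if y = z0 then c else 0) summable_on UNIV"
    by (rule summable_on_cong_neutral[where S="{z0}" and f="\<lambda>_. c", THEN iffD1]) auto
  have hs: "h summable_on UNIV"
    unfolding h_def by (rule summable_on_add[OF half_sum_summable summable_on_uminus[THEN iffD2, OF s1]])
  have hinf: "(\<Sum>\<^sub>\<infinity>y. h y) = 1 - (1 - \<epsilon>) ^ n"
  proof -
    have i1: "(\<Sum>\<^sub>\<infinity>y. if y = z0 then c else 0) = c"
    proof -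
      have "(\<Sum>\<^sub>\<infinity>y. if y = z0 then c else 0) = (\<Sum>\<^sub>\<infinity>y\<in>{z0}. c)"
        by (rule infsum_cong_neutral) auto
      then show ?thesis by simp
    qed
    have "(\<Sum>\<^sub>\<infinity>y. h y) = (\<Sum>\<^sub>\<infinity>y. pmf (W True) y * (1/2) + pmf (W False) y * (1/2)) + (\<Sum>\<^sub>\<infinity>y. - (if y = z0 then c else 0))"
      unfolding h_def by (rule infsum_add[OF half_sum_summable summable_on_uminus[THEN iffD2, OF s1]])
    also have "\<dots> = 1 - c" by (simp only: half_sum_infsum infsum_uminus i1)
    finally show ?thesis by (simp add: c_def)
  qed
  have "cap W \<le> (\<Sum>\<^sub>\<infinity>y. h y)"
    unfolding cap_def
  proof (rule infsum_mono[OF cap_summable hs])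
    fix y
    show "capterm (pmf (W True) y) (pmf (W False) y) \<le> h y"
    proof (cases "y = z0")
      case True then show ?thesis by (simp add: h_def pz0 c_def)
    next
      case False
      then show ?thesis using capterm_le[OF pmf_nonneg pmf_nonneg, of "W True" y "W False" y] by (simp add: h_def)
    qed
  qed
  also have "\<dots> = 1 - (1 - \<epsilon>) ^ n" by (rule hinf)
  also have "\<dots> \<le> real n * \<epsilon>"
    using Bernoulli_inequality[of "- \<epsilon>" n] e1 by simp
  finally show ?thesis unfolding W_def .
qed

lemma pair_fubini1:
  fixes f :: "'a \<times> 'b \<Rightarrow> real"
  assumes "f summable_on UNIV"
  shows "infsum f UNIV = (\<Sum>\<^sub>\<infinity>t. \<Sum>\<^sub>\<infinity>y. f (t, y))"
    and "(\<lambda>t. \<Sum>\<^sub>\<infinity>y. f (t, y)) summable_on UNIV"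
proof -
  have sw': "(\<lambda>(t, y). f (t, y)) summable_on (Sigma (UNIV :: 'a set) (\<lambda>_. UNIV))"
    using assms by (simp add: case_prod_unfold)
  show "infsum f UNIV = (\<Sum>\<^sub>\<infinity>t. \<Sum>\<^sub>\<infinity>y. f (t, y))"
    using infsum_Sigma'_banach[of "\<lambda>t y. f (t, y)" UNIV "\<lambda>_. UNIV"] sw' by (simp add: case_prod_unfold)
  show "(\<lambda>t. \<Sum>\<^sub>\<infinity>y. f (t, y)) summable_on UNIV"
    using summable_on_Sigma_banach[of "\<lambda>t y. f (t, y)" UNIV "\<lambda>_. UNIV"] sw' by simp
qed

lemma pmf_map_pair2: "pmf (map_pmf (\<lambda>y. (t', y)) p) (t, y) = (if t' = t then pmf p y else 0)"
proof (cases "t' = t")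
  case True
  then show ?thesis using pmf_map_inj'[of "\<lambda>y. (t', y)" p y] by (simp add: inj_on_def)
next
  case False
  then show ?thesis by (intro trans[OF pmf_map_notin]) auto
qed

lemma mix_cap:
  fixes D :: "'t pmf" and V :: "'t \<Rightarrow> bool \<Rightarrow> 'y pmf" and g :: "'y \<Rightarrow> 'z" and lenf :: "'y \<Rightarrow> 't"
  assumes inj: "inj g"
    and len: "\<And>t s y. y \<in> set_pmf (V t s) \<Longrightarrow> lenf y = t"
  shows "cap (\<lambda>s. D \<bind> (\<lambda>t. map_pmf g (V t s))) = (\<Sum>\<^sub>\<infinity>t. pmf D t * cap (V t))"
    and "(\<lambda>t. pmf D t * cap (V t)) summable_on UNIV"
proof -
  define P where "P s = D \<bind> (\<lambda>t. map_pmf (\<lambda>y. (t, y)) (V t s))" for s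
  have eqP: "D \<bind> (\<lambda>t. map_pmf g (V t s)) = map_pmf (g \<circ> snd) (P s)" for s
    unfolding P_def by (simp add: map_bind_pmf pmf.map_comp o_def)
  have suppP: "set_pmf (P s) \<subseteq> {(t, y). lenf y = t}" for s
    unfolding P_def using len by auto
  have injP: "inj_on (g \<circ> snd) (set_pmf (P True) \<union> set_pmf (P False))"
  proof (rule inj_onI)
    fix u v assume "u \<in> set_pmf (P True) \<union> set_pmf (P False)" "v \<in> set_pmf (P True) \<union> set_pmf (P False)"
      and e: "(g \<circ> snd) u = (g \<circ> snd) v"
    have sP: "lenf (snd w) = fst w" if "w \<in> set_pmf (P s)" for w s
      using subsetD[OF suppP that] by (auto simp: case_prod_unfold)
    then have "lenf (snd u) = fst u" "lenf (snd v) = fst v" using \<open>u \<in> _\<close> \<open>v \<in> _\<close> by blast+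
    moreover have "snd u = snd v" using e inj by (auto simp: inj_eq)
    ultimately show "u = v" by (metis prod.collapse)
  qed
  have capeq: "cap (\<lambda>s. D \<bind> (\<lambda>t. map_pmf g (V t s))) = cap P"
    unfolding eqP by (rule cap_map_inj[OF injP])
  have pP: "pmf (P s) (t, y) = pmf D t * pmf (V t s) y" for s t y
  proof -
    have "pmf (P s) (t, y) = measure_pmf.expectation D (\<lambda>t'. if t' = t then pmf (V t s) y else 0)"
      unfolding P_def pmf_bind by (intro integral_cong_AE) (auto simp: pmf_map_pair2)
    also have "\<dots> = (\<Sum>a\<in>{t}. (\<lambda>t'. if t' = t then pmf (V t s) y else 0) a * pmf D a)"
      by (rule integral_measure_pmf_real) (auto split: if_splits)
    finally show ?thesis by simp
  qed
  have termeq: "capterm (pmf (P True) (t, y)) (pmf (P False) (t, y)) = pmf D t * capterm (pmf (V t True) y) (pmf (V t False) y)" for t y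
    unfolding pP by (rule capterm_scale[OF pmf_nonneg])
  have f1: "cap P = (\<Sum>\<^sub>\<infinity>t. \<Sum>\<^sub>\<infinity>y. capterm (pmf (P True) (t, y)) (pmf (P False) (t, y)))"
    unfolding cap_def by (rule pair_fubini1(1)[OF cap_summable])
  have f2: "(\<lambda>t. \<Sum>\<^sub>\<infinity>y. capterm (pmf (P True) (t, y)) (pmf (P False) (t, y))) summable_on UNIV"
    by (rule pair_fubini1(2)[OF cap_summable])
  have inner: "(\<Sum>\<^sub>\<infinity>y. capterm (pmf (P True) (t, y)) (pmf (P False) (t, y))) = pmf D t * cap (V t)" for t
    unfolding termeq cap_def by (rule infsum_cmult_right')
  show "cap (\<lambda>s. D \<bind> (\<lambda>t. map_pmf g (V t s))) = (\<Sum>\<^sub>\<infinity>t. pmf D t * cap (V t))"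
    unfolding capeq f1 inner ..
  show "(\<lambda>t. pmf D t * cap (V t)) summable_on UNIV"
    using f2 unfolding inner .
qed

definition jointW :: "(bool \<Rightarrow> 'y pmf) \<Rightarrow> (bool \<times> 'y) pmf" where
  "jointW W = pmf_of_set UNIV \<bind> (\<lambda>s. map_pmf (\<lambda>y. (s, y)) (W s))"

lemma unif_exp:
  fixes f :: "bool \<Rightarrow> real"
  shows "measure_pmf.expectation (pmf_of_set (UNIV :: bool set)) f = (f True + f False) / 2"
  by (subst integral_measure_pmf_real[where A=UNIV]) (auto simp: UNIV_bool field_simps)

lemma pmf_jointW: "pmf (jointW W) (s, y) = pmf (W s) y / 2"
  by (cases s) (simp_all add: jointW_def pmf_bind unif_exp pmf_map_pair2)

lemma jointW_fst: "map_pmf fst (jointW W) = pmf_of_set UNIV"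
  by (simp add: jointW_def map_bind_pmf pmf.map_comp o_def map_pmf_const bind_return_pmf')

lemma pmf_jointW_fst: "pmf (map_pmf fst (jointW W)) s = 1 / 2"
  by (simp add: jointW_fst UNIV_bool)

lemma pmf_jointW_snd: "pmf (map_pmf snd (jointW W)) y = (pmf (W True) y + pmf (W False) y) / 2"
proof -
  have "map_pmf snd (jointW W) = pmf_of_set UNIV \<bind> W"
    by (simp add: jointW_def map_bind_pmf pmf.map_comp o_def pmf.map_ident)
  then show ?thesis by (simp add: pmf_bind unif_exp)
qed

lemma chi2_term:
  fixes a b :: real assumes "0 \<le> a" "0 \<le> b"
  shows "(a / 2)^2 / (1 / 2 * ((a + b) / 2)) + (b / 2)^2 / (1 / 2 * ((a + b) / 2)) = (a * (1/2) + b * (1/2)) + capterm a b"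
proof (cases "a + b = 0")
  case True
  then have "a = 0" "b = 0" using assms by auto
  then show ?thesis by (simp add: capterm_def)
next
  case False
  define t where "t = a + b"
  have t: "t \<noteq> 0" using False by (simp add: t_def)
  have "(a / 2)^2 / (1 / 2 * (t / 2)) + (b / 2)^2 / (1 / 2 * (t / 2)) - ((a * (1/2) + b * (1/2)) + (a - b)^2 / (2 * t)) = 0"
    using t by (simp add: field_simps) (simp add: t_def power2_eq_square algebra_simps)
  then show ?thesis unfolding capterm_def t_def by simp
qed

definition Tchi :: "(bool \<times> 'y) pmf \<Rightarrow> bool \<times> 'y \<Rightarrow> real" where
  "Tchi P z = (pmf P z)\<^sup>2 / (pmf (map_pmf fst P) (fst z) * pmf (map_pmf snd P) (snd z))"

lemma Tchi_props: "Tchi (jointW W) summable_on UNIV" "(\<Sum>\<^sub>\<infinity>z. Tchi (jointW W) z) = 1 + cap W"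
proof -
  define T where "T = Tchi (jointW W)"
  have Tf: "T (s, y) = (pmf (W s) y / 2)^2 / (1/2 * ((pmf (W True) y + pmf (W False) y) / 2))" for s y
    by (simp add: T_def Tchi_def pmf_jointW pmf_jointW_fst pmf_jointW_snd)
  have Tle: "T z \<le> 2 * pmf (jointW W) z" for z
  proof -
    obtain s y where z: "z = (s, y)" by (cases z)
    define a where "a = pmf (W s) y"
    define t where "t = pmf (W True) y + pmf (W False) y"
    have a0: "0 \<le> a" and at: "a \<le> t" unfolding a_def t_def by (cases s; simp)+
    have "T z = a^2 / t" unfolding z Tf a_def[symmetric] t_def[symmetric] by (simp add: power2_eq_square field_simps)
    also have "\<dots> \<le> a"
    proof (cases "t = 0")
      case True then show ?thesis using a0 by simp
    next
      case False
      then have "t > 0" using a0 at by auto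
      then show ?thesis using a0 at by (simp add: power2_eq_square divide_le_eq mult_left_mono)
    qed
    finally show ?thesis by (simp add: z pmf_jointW a_def)
  qed
  have T0: "0 \<le> T z" for z unfolding T_def Tchi_def by simp
  have Ts: "T summable_on UNIV"
    by (rule nonneg_summable_le[OF T0 Tle]) (intro summable_on_cmult_right pmf_summable)
  then show "Tchi (jointW W) summable_on UNIV" by (simp add: T_def)
  have "(\<Sum>\<^sub>\<infinity>z. T z) = (\<Sum>\<^sub>\<infinity>y. \<Sum>\<^sub>\<infinity>s. T (s, y))" by (rule pair_fubini(1)[OF Ts])
  also have "\<dots> = (\<Sum>\<^sub>\<infinity>y. (pmf (W True) y * (1/2) + pmf (W False) y * (1/2)) + capterm (pmf (W True) y) (pmf (W False) y))"
  proof (rule infsum_cong)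
    fix y
    have "(\<Sum>\<^sub>\<infinity>s. T (s, y)) = T (True, y) + T (False, y)" by (simp add: infsum_finite UNIV_bool)
    also have "\<dots> = (pmf (W True) y * (1/2) + pmf (W False) y * (1/2)) + capterm (pmf (W True) y) (pmf (W False) y)"
      unfolding Tf by (rule chi2_term) simp_all
    finally show "(\<Sum>\<^sub>\<infinity>s. T (s, y)) = \<dots>" .
  qed
  also have "\<dots> = 1 + cap W"
    unfolding cap_def by (subst infsum_add[OF half_sum_summable cap_summable]) (simp only: half_sum_infsum)
  finally show "(\<Sum>\<^sub>\<infinity>z. Tchi (jointW W) z) = 1 + cap W" by (simp add: T_def)
qed

lemma C_chi2_cap: "C_chi2 W = cap W"
proof -
  have J: "bind_pmf (pmf_of_set UNIV) (\<lambda>s. map_pmf (\<lambda>y. (s, y)) (W s)) = jointW W" by (simp add: jointW_def)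
  show ?thesis unfolding C_chi2_def J chi2_info_pmf_def Tchi_def[symmetric] using Tchi_props(2)[of W] by simp
qed

lemma MI_bounds: "0 \<le> mutual_info_pmf (jointW W) \<and> mutual_info_pmf (jointW W) \<le> cap W"
proof (cases "integrable (measure_pmf (jointW W)) (\<lambda>(x, y). ln (pmf (jointW W) (x, y) / (pmf (map_pmf fst (jointW W)) x * pmf (map_pmf snd (jointW W)) y)))")
  case False
  then show ?thesis unfolding mutual_info_pmf_def using cap_nonneg[of W] by (simp add: not_integrable_integral_eq)
next
  case True
  define P where "P = jointW W"
  define g where "g = (\<lambda>(x, y). ln (pmf P (x, y) / (pmf (map_pmf fst P) x * pmf (map_pmf snd P) y)))"
  define Q where "Q z = pmf (map_pmf fst P) (fst z) * pmf (map_pmf snd P) (snd z)" for z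
  have int: "integrable (measure_pmf P) g" using True by (simp add: P_def g_def)
  have MI: "mutual_info_pmf P = (\<Sum>\<^sub>\<infinity>z. pmf P z * g z)"
    unfolding mutual_info_pmf_def g_def[symmetric] by (rule exp_pmf_infsum[OF int])
  have gs: "(\<lambda>z. pmf P z * g z) summable_on UNIV" using int integrable_pmf_iff_summable by blast
  have Qpair: "Q z = pmf (pair_pmf (map_pmf fst P) (map_pmf snd P)) z" for z
    by (cases z) (simp add: Q_def pmf_pair)
  have Qs: "Q summable_on UNIV" unfolding Qpair[abs_def] by (rule pmf_summable)
  have Qi: "(\<Sum>\<^sub>\<infinity>z. Q z) = 1" unfolding Qpair by (rule pmf_infsum)
  have Q0: "0 \<le> Q z" for z by (simp add: Q_def)
  have Tchi: "Tchi P z = (pmf P z)^2 / Q z" for z by (simp add: Tchi_def Q_def)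
  have Qpos: "Q z > 0" if "pmf P z > 0" for z
  proof -
    obtain s y where z: "z = (s, y)" by (cases z)
    have a: "pmf (W s) y > 0" using that by (simp add: z P_def pmf_jointW)
    have "pmf (W s) y \<le> pmf (W True) y + pmf (W False) y" by (cases s) simp_all
    then have "pmf (map_pmf snd P) y > 0" using a by (simp add: P_def pmf_jointW_snd)
    then show ?thesis by (simp add: Q_def z P_def pmf_jointW_fst)
  qed
  have up: "pmf P z * g z \<le> Tchi P z - pmf P z" for z
  proof (cases "pmf P z > 0")
    case False
    then have "pmf P z = 0" using pmf_nonneg[of P z] by linarith
    then show ?thesis by (simp add: Tchi)
  next
    case True
    have q: "Q z > 0" by (rule Qpos[OF True])
    have r: "pmf P z / Q z > 0" using True q by simp
    have gz: "g z = ln (pmf P z / Q z)" by (cases z) (simp add: g_def Q_def)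
    have "ln (pmf P z / Q z) \<le> pmf P z / Q z - 1" by (rule ln_le_minus_one[OF r])
    then have "pmf P z * g z \<le> pmf P z * (pmf P z / Q z - 1)" unfolding gz using True by (intro mult_left_mono) auto
    also have "\<dots> = Tchi P z - pmf P z" unfolding Tchi by (simp add: power2_eq_square algebra_simps)
    finally show ?thesis .
  qed
  have low: "pmf P z - Q z \<le> pmf P z * g z" for z
  proof (cases "pmf P z > 0")
    case False
    then have "pmf P z = 0" using pmf_nonneg[of P z] by linarith
    then show ?thesis using Q0[of z] by simp
  next
    case True
    have q: "Q z > 0" by (rule Qpos[OF True])
    have r: "Q z / pmf P z > 0" using True q by simp
    have gz: "g z = - ln (Q z / pmf P z)" using True q by (cases z) (simp add: g_def Q_def ln_div)
    have "ln (Q z / pmf P z) \<le> Q z / pmf P z - 1" by (rule ln_le_minus_one[OF r])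
    then have "pmf P z * (1 - Q z / pmf P z) \<le> pmf P z * g z" unfolding gz using True by (intro mult_left_mono) auto
    moreover have "pmf P z * (1 - Q z / pmf P z) = pmf P z - Q z" using True by (simp add: algebra_simps)
    ultimately show ?thesis by simp
  qed
  have Ts: "Tchi P summable_on UNIV" unfolding P_def by (rule Tchi_props(1))
  have Ti: "(\<Sum>\<^sub>\<infinity>z. Tchi P z) = 1 + cap W" unfolding P_def by (rule Tchi_props(2))
  have s1: "(\<lambda>z. Tchi P z - pmf P z) summable_on UNIV"
    unfolding diff_conv_add_uminus by (intro summable_on_add Ts summable_on_uminus[THEN iffD2] pmf_summable)
  have s2: "(\<lambda>z. pmf P z - Q z) summable_on UNIV"
    unfolding diff_conv_add_uminus by (intro summable_on_add Qs summable_on_uminus[THEN iffD2] pmf_summable)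
  have "(\<Sum>\<^sub>\<infinity>z. pmf P z * g z) \<le> (\<Sum>\<^sub>\<infinity>z. Tchi P z - pmf P z)" by (rule infsum_mono[OF gs s1 up])
  also have "\<dots> = (\<Sum>\<^sub>\<infinity>z. Tchi P z) + (\<Sum>\<^sub>\<infinity>z. - pmf P z)"
    unfolding diff_conv_add_uminus by (intro infsum_add Ts summable_on_uminus[THEN iffD2] pmf_summable)
  also have "\<dots> = cap W" by (simp only: Ti infsum_uminus pmf_infsum)
  finally have u: "(\<Sum>\<^sub>\<infinity>z. pmf P z * g z) \<le> cap W" .
  have "0 = (\<Sum>\<^sub>\<infinity>z. pmf P z) + (\<Sum>\<^sub>\<infinity>z. - Q z)" by (simp only: infsum_uminus pmf_infsum Qi)
  also have "\<dots> = (\<Sum>\<^sub>\<infinity>z. pmf P z - Q z)"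
    unfolding diff_conv_add_uminus by (intro infsum_add[symmetric] Qs summable_on_uminus[THEN iffD2] pmf_summable)
  also have "\<dots> \<le> (\<Sum>\<^sub>\<infinity>z. pmf P z * g z)" by (rule infsum_mono[OF s2 gs low])
  finally have l: "0 \<le> (\<Sum>\<^sub>\<infinity>z. pmf P z * g z)" .
  show ?thesis using u l MI by (simp add: P_def)
qed



lemma mm_Not: "map Not (map Not ys) = ys" by (induction ys) auto

lemma inj_map_Not: "inj (map Not)"
  by (rule inj_on_inverseI[where g="map Not"]) (rule mm_Not)

lemma bms_B:
  assumes "bms_flip B"
  shows "B False = map_pmf (map Not) (B True)"
proof (rule pmf_eqI)
  fix ys :: "bool list"
  have mm: "map Not (map Not ys) = ys" by (rule mm_Not)
  have "pmf (map_pmf (map Not) (B True)) ys = pmf (map_pmf (map Not) (B True)) (map Not (map Not ys))"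
    by (simp only: mm)
  also have "\<dots> = pmf (B True) (map Not ys)" by (rule pmf_map_inj'[OF inj_map_Not])
  also have "\<dots> = measure_pmf.prob (B True) {map Not ys}" by (simp add: measure_pmf_single)
  also have "\<dots> = measure_pmf.prob (B False) (map Not ` {map Not ys})"
    using assms[unfolded bms_flip_def, rule_format, of "{map Not ys}"] .
  also have "map Not ` {map Not ys} = {ys}" using mm by simp
  also have "measure_pmf.prob (B False) {ys} = pmf (B False) ys" by (simp add: measure_pmf_single)
  finally show "pmf (B False) ys = pmf (map_pmf (map Not) (B True)) ys" by simp
qed

lemma BMS_H:
  assumes bms: "BMS M \<sigma>" and bB: "B False = map_pmf (map Not) (B True)"
  shows "BMS (\<lambda>s. B s \<bind> (\<lambda>xs. seq_pmf (map M xs))) (map \<sigma>)"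
  unfolding BMS_def
proof
  show "\<forall>y. map \<sigma> (map \<sigma> y) = y" using BMS_inv[OF bms] by (simp add: map_idI)
  have Mn: "M (\<not> x) = map_pmf \<sigma> (M x)" for x by (rule BMS_flip[OF bms])
  have "B False \<bind> (\<lambda>xs. seq_pmf (map M xs)) = B True \<bind> (\<lambda>xs. seq_pmf (map (\<lambda>x. M (\<not> x)) xs))"
    unfolding bB by (simp add: bind_map_pmf o_def)
  also have "\<dots> = B True \<bind> (\<lambda>xs. map_pmf (map \<sigma>) (seq_pmf (map M xs)))"
    by (simp add: Mn seq_pmf_map_map[symmetric] o_def)
  also have "\<dots> = map_pmf (map \<sigma>) (B True \<bind> (\<lambda>xs. seq_pmf (map M xs)))"
    by (simp add: map_bind_pmf)
  finally show "B False \<bind> (\<lambda>xs. seq_pmf (map M xs)) = map_pmf (map \<sigma>) (B True \<bind> (\<lambda>xs. seq_pmf (map M xs)))" .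
qed

fun flip_obs :: "obs \<Rightarrow> obs" where
  "flip_obs (Leaf b) = Leaf (\<not> b)"
| "flip_obs (Inner yss) = Inner (map (map flip_obs) yss)"

lemma flip_obs_inv: "flip_obs (flip_obs o') = o'"
proof (induction o' rule: flip_obs.induct)
  case (1 b) then show ?case by simp
next
  case (2 yss) then show ?case by (simp add: map_idI)
qed

lemma seq_pmf_replicate_map: "seq_pmf (replicate t (map_pmf f p)) = map_pmf (map f) (seq_pmf (replicate t p))"
  using seq_pmf_map_map[of f "replicate t p"] by simp

lemma BMS_obs:
  assumes bB: "B False = map_pmf (map Not) (B True)"
  shows "BMS (boht_obs D B k) flip_obs"
proof (induction k)
  case 0
  then show ?case by (simp add: BMS_def flip_obs_inv)
next
  case (Suc k)
  define H where "H = (\<lambda>s. B s \<bind> (\<lambda>xs. seq_pmf (map (boht_obs D B k) xs)))"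
  have bH: "BMS H (map flip_obs)" unfolding H_def by (rule BMS_H[OF Suc bB])
  have HF: "H False = map_pmf (map flip_obs) (H True)" using bH by (simp add: BMS_def)
  have "boht_obs D B (Suc k) False = D \<bind> (\<lambda>t. map_pmf Inner (seq_pmf (replicate t (H False))))"
    by (simp add: H_def)
  also have "\<dots> = map_pmf flip_obs (D \<bind> (\<lambda>t. map_pmf Inner (seq_pmf (replicate t (H True)))))"
    unfolding HF seq_pmf_replicate_map by (simp add: map_bind_pmf pmf.map_comp o_def)
  also have "\<dots> = map_pmf flip_obs (boht_obs D B (Suc k) True)" by (simp add: H_def)
  finally show ?case unfolding BMS_def by (simp add: flip_obs_inv)
qed

lemma inj_on_map_Inl: "inj_on (map Inl) A" by (rule inj_on_subset[OF list.inj_map[OF inj_Inl] subset_UNIV])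
lemma inj_on_map_Inr: "inj_on (map Inr) A" by (rule inj_on_subset[OF list.inj_map[OF inj_Inr] subset_UNIV])

lemma cap_V_bound:
  fixes H :: "bool \<Rightarrow> 'y pmf"
  assumes bH: "BMS H \<sigma>"
  shows "cap (\<lambda>s. seq_pmf (replicate t (H s))) \<le> real t * cap H"
proof -
  define J where "J (s::bool) = return_pmf (replicate t s, ([] :: ('y + bool option) list))" for s
  have lenJ: "\<And>s p. p \<in> set_pmf (J s) \<Longrightarrow> length (fst p) = t" by (simp add: J_def)
  have 1: "obsM H J = (\<lambda>s. map_pmf (map Inl) (seq_pmf (replicate t (H s))))"
    by (rule ext) (simp add: obsM_def J_def bind_return_pmf map_replicate)
  have 2: "obsE (1 - cap H) J = (\<lambda>s. map_pmf (map Inr) (return_pmf (replicate t s) \<bind> (\<lambda>xs. seq_pmf (map (BEC (1 - cap H)) xs))))"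
    by (rule ext) (simp add: obsE_def J_def bind_return_pmf)
  have "cap (\<lambda>s. seq_pmf (replicate t (H s))) = cap (obsM H J)"
    unfolding 1 by (rule cap_map_inj[OF inj_on_map_Inl, symmetric])
  also have "\<dots> \<le> cap (obsE (1 - cap H) J)" by (rule list_replace[OF bH lenJ])
  also have "\<dots> = cap (\<lambda>s. return_pmf (replicate t s) \<bind> (\<lambda>xs. seq_pmf (map (BEC (1 - cap H)) xs)))"
    unfolding 2 by (rule cap_map_inj[OF inj_on_map_Inr])
  also have "\<dots> \<le> real t * cap H"
    by (rule BEC_bound[OF cap_nonneg cap_le1]) simp
  finally show ?thesis .
qed

lemma cap_H_bound:
  fixes M :: "bool \<Rightarrow> 'y pmf"
  assumes bM: "BMS M \<sigma>" and len: "\<And>s xs. xs \<in> set_pmf (B s) \<Longrightarrow> length xs = n"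
  shows "cap (\<lambda>s. B s \<bind> (\<lambda>xs. seq_pmf (map M xs))) \<le> cap (BEC_prod_comp (1 - cap M) B)"
proof -
  define J where "J s = map_pmf (\<lambda>xs. (xs, ([] :: ('y + bool option) list))) (B s)" for s
  have lenJ: "\<And>s p. p \<in> set_pmf (J s) \<Longrightarrow> length (fst p) = n" using len by (auto simp: J_def)
  have 1: "obsM M J = (\<lambda>s. map_pmf (map Inl) (B s \<bind> (\<lambda>xs. seq_pmf (map M xs))))"
    by (rule ext) (simp add: obsM_def J_def bind_map_pmf map_bind_pmf)
  have 2: "obsE (1 - cap M) J = (\<lambda>s. map_pmf (map Inr) (BEC_prod_comp (1 - cap M) B s))"
    by (rule ext) (simp add: obsE_def J_def bind_map_pmf map_bind_pmf BEC_prod_comp_def)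
  have "cap (\<lambda>s. B s \<bind> (\<lambda>xs. seq_pmf (map M xs))) = cap (obsM M J)"
    unfolding 1 by (rule cap_map_inj[OF inj_on_map_Inl, symmetric])
  also have "\<dots> \<le> cap (obsE (1 - cap M) J)" by (rule list_replace[OF bM lenJ])
  also have "\<dots> = cap (BEC_prod_comp (1 - cap M) B)"
    unfolding 2 by (rule cap_map_inj[OF inj_on_map_Inr])
  finally show ?thesis .
qed

theorem mainTheorem13:
  fixes r :: nat and B :: "bool \<Rightarrow> bool list pmf" and D :: "nat pmf" and d :: real
  assumes r2: "r \<ge> 2"
    and len: "\<And>s xs. xs \<in> set_pmf (B s) \<Longrightarrow> length xs = r - 1"
    and bms: "bms_flip B"
    and unif_marg: "\<And>i. i < r - 1 \<Longrightarrow>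
        map_pmf (\<lambda>(s, xs). xs ! i) (bind_pmf (pmf_of_set UNIV) (\<lambda>s. map_pmf (\<lambda>xs. (s, xs)) (B s)))
        = pmf_of_set (UNIV :: bool set)"
    and intD: "integrable (measure_pmf D) real"
    and mean: "measure_pmf.expectation D real = d"
    and cond: "real (r - 1) * d * (SUP \<epsilon>\<in>{0<..1}. f_B r B \<epsilon>) < 1"
  shows "(\<lambda>k. mutual_info_pmf (boht_joint D B k)) \<longlonglongrightarrow> 0"
proof -
  define S where "S = (SUP \<epsilon>\<in>{0<..1}. f_B r B \<epsilon>)"
  define c where "c = real (r - 1) * d * S"
  define \<eta> where "\<eta> k = cap (boht_obs D B k)" for k
  have rpos: "real (r - 1) > 0" using r2 by simp
  have bB: "B False = map_pmf (map Not) (B True)" by (rule bms_B[OF bms])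
  have bM: "BMS (boht_obs D B k) flip_obs" for k by (rule BMS_obs[OF bB])
  have BEC_B: "cap (BEC_prod_comp (1 - \<epsilon>) B) \<le> real (r - 1) * \<epsilon>" if "0 \<le> \<epsilon>" "\<epsilon> \<le> 1" for \<epsilon>
    unfolding BEC_prod_comp_def by (rule BEC_bound[OF that len])
  have fB_le1: "f_B r B \<epsilon> \<le> 1" if "\<epsilon> \<in> {0<..1}" for \<epsilon>
  proof -
    have e: "0 < \<epsilon>" "\<epsilon> \<le> 1" using that by auto
    have "C_chi2 (BEC_prod_comp (1 - \<epsilon>) B) \<le> real (r - 1) * \<epsilon>"
      unfolding C_chi2_cap using BEC_B e by simp
    then show ?thesis unfolding f_B_def using rpos e by (simp add: divide_le_eq)
  qed
  have fB0: "0 \<le> f_B r B \<epsilon>" if "\<epsilon> \<in> {0<..1}" for \<epsilon>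
    unfolding f_B_def C_chi2_cap using that cap_nonneg by (intro divide_nonneg_nonneg) auto
  have bdd: "bdd_above (f_B r B ` {0<..1})" using fB_le1 by (intro bdd_aboveI[where M=1]) auto
  have fB_S: "f_B r B \<epsilon> \<le> S" if "\<epsilon> \<in> {0<..1}" for \<epsilon>
    unfolding S_def by (rule cSUP_upper[OF that bdd])
  have S0: "0 \<le> S" using fB0[of 1] fB_S[of 1] by simp
  have d0: "0 \<le> d" unfolding mean[symmetric] by (rule integral_nonneg_AE) simp
  have c0: "0 \<le> c" unfolding c_def using S0 d0 by simp
  have c1: "c < 1" unfolding c_def S_def using cond .
  have dsum: "(\<lambda>t. pmf D t * real t) summable_on UNIV" using intD integrable_pmf_iff_summable by blast
  have dinf: "(\<Sum>\<^sub>\<infinity>t. pmf D t * real t) = d" using exp_pmf_infsum[OF intD] mean by simp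
  have key: "cap (BEC_prod_comp (1 - e) B) \<le> real (r - 1) * e * S" if "0 \<le> e" "e \<le> 1" for e
  proof (cases "e = 0")
    case True
    then show ?thesis using BEC_B[of 0] by simp
  next
    case False
    then have ep: "e \<in> {0<..1}" using that by auto
    have "cap (BEC_prod_comp (1 - e) B) = f_B r B e * (real (r - 1) * e)"
      unfolding f_B_def C_chi2_cap using rpos ep by simp
    also have "\<dots> \<le> S * (real (r - 1) * e)"
      using fB_S[OF ep] rpos ep by (intro mult_right_mono) auto
    finally show ?thesis by (simp add: algebra_simps)
  qed
  have step: "\<eta> (Suc k) \<le> c * \<eta> k" for k
  proof -
    define H where "H = (\<lambda>s. B s \<bind> (\<lambda>xs. seq_pmf (map (boht_obs D B k) xs)))"
    define V where "V t s = seq_pmf (replicate t (H s))" for t s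
    have obsS: "boht_obs D B (Suc k) = (\<lambda>s. D \<bind> (\<lambda>t. map_pmf Inner (V t s)))"
      by (rule ext) (simp add: V_def H_def)
    have lenV: "length y = t" if "y \<in> set_pmf (V t s)" for t s y
      using set_seq_pmf_length[OF that[unfolded V_def]] by simp
    have injI: "inj Inner" by (simp add: inj_def)
    have eq: "\<eta> (Suc k) = (\<Sum>\<^sub>\<infinity>t. pmf D t * cap (V t))"
      unfolding \<eta>_def obsS by (rule mix_cap(1)[OF injI lenV])
    have sm: "(\<lambda>t. pmf D t * cap (V t)) summable_on UNIV" by (rule mix_cap(2)[OF injI lenV])
    have bH: "BMS H (map flip_obs)" unfolding H_def by (rule BMS_H[OF bM bB])
    have Vb: "cap (V t) \<le> real t * cap H" for t unfolding V_def by (rule cap_V_bound[OF bH])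
    have sm2: "(\<lambda>t. pmf D t * real t * cap H) summable_on UNIV" by (rule summable_on_cmult_left[OF dsum])
    have "(\<Sum>\<^sub>\<infinity>t. pmf D t * cap (V t)) \<le> (\<Sum>\<^sub>\<infinity>t. pmf D t * real t * cap H)"
    proof (rule infsum_mono[OF sm sm2])
      fix t
      show "pmf D t * cap (V t) \<le> pmf D t * real t * cap H"
        using mult_left_mono[OF Vb[of t] pmf_nonneg[of D t]] by (simp add: mult.assoc)
    qed
    also have "\<dots> = d * cap H" using dinf by (simp add: infsum_cmult_left')
    also have "cap H \<le> cap (BEC_prod_comp (1 - \<eta> k) B)"
      unfolding H_def \<eta>_def by (rule cap_H_bound[OF bM len])
    also have "\<dots> \<le> real (r - 1) * \<eta> k * S"
      by (rule key) (simp_all add: \<eta>_def cap_nonneg cap_le1)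
    finally have "\<eta> (Suc k) \<le> d * (real (r - 1) * \<eta> k * S)" using eq d0 by (simp add: mult_left_mono)
    then show ?thesis by (simp add: c_def algebra_simps)
  qed
  have bound: "\<eta> k \<le> c ^ k" for k
  proof (induction k)
    case 0 then show ?case by (simp add: \<eta>_def cap_le1)
  next
    case (Suc k)
    have "\<eta> (Suc k) \<le> c * \<eta> k" by (rule step)
    also have "\<dots> \<le> c * c ^ k" by (rule mult_left_mono[OF Suc.IH c0])
    finally show ?case by simp
  qed
  have MIeq: "boht_joint D B k = jointW (boht_obs D B k)" for k
    by (simp add: boht_joint_def jointW_def)
  have lo: "0 \<le> mutual_info_pmf (boht_joint D B k)" for k
    using MI_bounds[of "boht_obs D B k"] MIeq by simp
  have hi: "mutual_info_pmf (boht_joint D B k) \<le> c ^ k" for k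
    using MI_bounds[of "boht_obs D B k"] MIeq bound[of k] by (simp add: \<eta>_def)
  have lim: "(\<lambda>k. c ^ k) \<longlonglongrightarrow> 0" using c0 c1 by (intro LIMSEQ_power_zero) simp
  show ?thesis
    by (rule tendsto_sandwich[OF _ _ tendsto_const lim]) (use lo hi in auto)
qed

end
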